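(* For every integer $n\ge 4$, $g(n,4) \ge \frac{n(n-3)}{48}$.
   Context: For integers $2\le k\le n$, let $S_n$ denote the set of permutations of $[n]=\{1,\dots,n\}$ (written as sequences), and $S_{n,k}$ the set of all sequences of $k$ distinct elements of $[n]$. A sequence $\kappa\in S_{n,k}$ is a subsequence of a permutation $\pi\in S_n$ if its elements appear in $\pi$ in the same relative order as in $\kappa$. A perfect sequence covering array ${\rm PSCA}(n,k)$ with multiplicity $\lambda$ (a positive integer) is a multiset $X$ of elements of $S_n$ such that every $\kappa\in S_{n,k}$ is a subsequence of exactly $\lambda$ elements of $X$ (counted with multiplicity). $g(n,k)$ denotes the smallest $\lambda$ for which a ${\rm PSCA}(n,k)$ with multiplicity $\lambda$ exists. *)

theory Defs
  imports Complex_Main "HOL-Library.Multiset" "HOL-Library.Sublist"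
begin

definition perms :: "nat \<Rightarrow> nat list set" where
  "perms n = {\<pi>. distinct \<pi> \<and> set \<pi> = {1..n}}"

definition kseqs :: "nat \<Rightarrow> nat \<Rightarrow> nat list set" where
  "kseqs n k = {\<kappa>. distinct \<kappa> \<and> length \<kappa> = k \<and> set \<kappa> \<subseteq> {1..n}}"

definition is_PSCA :: "nat \<Rightarrow> nat \<Rightarrow> nat \<Rightarrow> nat list multiset \<Rightarrow> bool" where
  "is_PSCA n k lam X \<longleftrightarrow>
     set_mset X \<subseteq> perms n \<and>
     (\<forall>\<kappa>\<in>kseqs n k. size (filter_mset (\<lambda>\<pi>. subseq \<kappa> \<pi>) X) = lam)"

definition g :: "nat \<Rightarrow> nat \<Rightarrow> nat" where
  "g n k = (LEAST lam. 0 < lam \<and> (\<exists>X. is_PSCA n k lam X))"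

end

theory Submission
  imports Defs "HOL-Combinatorics.Multiset_Permutations"
begin

definition sg :: "nat list \<Rightarrow> nat \<Rightarrow> nat \<Rightarrow> real" where
  "sg x u v = (if subseq [u,v] x then 1 else -1)"
definition cyc :: "nat list \<Rightarrow> nat \<Rightarrow> nat \<Rightarrow> nat \<Rightarrow> real" where
  "cyc x a b c = sg x a b + sg x b c + sg x c a"

lemma sum_perm:
  assumes "finite A" "A \<noteq> {}"
  shows "sum F (permutations_of_set A) = (\<Sum>x\<in>A. sum (\<lambda>xs. F (x#xs)) (permutations_of_set (A - {x})))"
proof -
  have "sum F (permutations_of_set A) = sum F (\<Union>x\<in>A. (\<lambda>xs. x # xs) ` permutations_of_set (A - {x}))"
    using permutations_of_set_nonempty[OF assms(2)] by simp
  also have "\<dots> = (\<Sum>x\<in>A. sum F ((\<lambda>xs. x # xs) ` permutations_of_set (A - {x})))"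
    by (rule sum.UNION_disjoint) (use assms in auto)
  also have "\<dots> = (\<Sum>x\<in>A. sum (\<lambda>xs. F (x#xs)) (permutations_of_set (A - {x})))"
    by (rule sum.cong) (auto simp: sum.reindex inj_on_def)
  finally show ?thesis .
qed

lemma perm2_sum: "a \<noteq> b \<Longrightarrow> sum F (permutations_of_set {a,b}) = F [a,b] + F [b,a]"
  by (simp add: permutations_of_set_doubleton)

lemma perm3_sum:
  assumes "distinct [a,b,c]"
  shows "sum F (permutations_of_set {a,b,c}) =
    F [a,b,c] + F [a,c,b] + F [b,a,c] + F [b,c,a] + F [c,a,b] + F [c,b,a]"
proof -
  have e: "{a,b,c} - {a} = {b,c}" "{a,b,c} - {b} = {a,c}" "{a,b,c} - {c} = {a,b}" using assms by auto
  show ?thesis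
    by (subst sum_perm) (use assms in \<open>simp_all add: e perm2_sum add.assoc\<close>)
qed

lemma perm4_sum:
  assumes "distinct [a,b,c,d]"
  shows "sum F (permutations_of_set {a,b,c,d}) =
    F [a,b,c,d] + F [a,b,d,c] + F [a,c,b,d] + F [a,c,d,b] + F [a,d,b,c] + F [a,d,c,b] +
    F [b,a,c,d] + F [b,a,d,c] + F [b,c,a,d] + F [b,c,d,a] + F [b,d,a,c] + F [b,d,c,a] +
    F [c,a,b,d] + F [c,a,d,b] + F [c,b,a,d] + F [c,b,d,a] + F [c,d,a,b] + F [c,d,b,a] +
    F [d,a,b,c] + F [d,a,c,b] + F [d,b,a,c] + F [d,b,c,a] + F [d,c,a,b] + F [d,c,b,a]"
proof -
  have e: "{a,b,c,d} - {a} = {b,c,d}" "{a,b,c,d} - {b} = {a,c,d}" "{a,b,c,d} - {c} = {a,b,d}"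
     "{a,b,c,d} - {d} = {a,b,c}" using assms by auto
  have d3: "distinct [b,c,d]" "distinct [a,c,d]" "distinct [a,b,d]" "distinct [a,b,c]" using assms by auto
  show ?thesis
    by (subst sum_perm) (use assms in \<open>simp_all add: e perm3_sum[OF d3(1)] perm3_sum[OF d3(2)] perm3_sum[OF d3(3)] perm3_sum[OF d3(4)] add.assoc\<close>)
qed

lemma filter_subseq_iff:
  assumes x: "x \<in> perms n" and k: "distinct k" "set k = S" "S \<subseteq> {1..n}"
  shows "subseq k x \<longleftrightarrow> filter (\<lambda>v. v \<in> S) x = k"
proof
  assume h: "subseq k x"
  have "subseq (filter (\<lambda>v. v \<in> S) k) (filter (\<lambda>v. v \<in> S) x)" using h by simp
  moreover have "filter (\<lambda>v. v \<in> S) k = k" using k by (simp add: filter_id_conv)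
  moreover have "length (filter (\<lambda>v. v \<in> S) x) = length k"
  proof -
    have "distinct (filter (\<lambda>v. v \<in> S) x)" using x by (simp add: perms_def)
    moreover have "set (filter (\<lambda>v. v \<in> S) x) = S" using x k by (auto simp: perms_def)
    ultimately show ?thesis using k by (metis distinct_card)
  qed
  ultimately show "filter (\<lambda>v. v \<in> S) x = k" by (metis subseq_same_length)
next
  assume "filter (\<lambda>v. v \<in> S) x = k"
  then show "subseq k x" by (metis subseq_filter_left)
qed

lemma sg_filter:
  assumes "u \<in> S" "v \<in> S"
  shows "sg x u v = sg (filter (\<lambda>w. w \<in> S) x) u v"
proof -
  have "subseq [u,v] x \<longleftrightarrow> subseq [u,v] (filter (\<lambda>w. w \<in> S) x)"
  proof
    assume "subseq [u,v] x"
    then have "subseq (filter (\<lambda>w. w \<in> S) [u,v]) (filter (\<lambda>w. w \<in> S) x)"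
      by (rule subseq_filter)
    moreover have "filter (\<lambda>w. w \<in> S) [u,v] = [u,v]" using assms by simp
    ultimately show "subseq [u,v] (filter (\<lambda>w. w \<in> S) x)" by simp
  next
    assume "subseq [u,v] (filter (\<lambda>w. w \<in> S) x)"
    then show "subseq [u,v] x" by (meson subseq_filter_left subseq_order.order_trans)
  qed
  then show ?thesis by (simp add: sg_def)
qed


lemma cyc_filter:
  assumes "a \<in> S" "b \<in> S" "c \<in> S"
  shows "cyc x a b c = cyc (filter (\<lambda>w. w \<in> S) x) a b c"
  unfolding cyc_def using sg_filter[of a S b x] sg_filter[of b S c x] sg_filter[of c S a x] assms by simp

lemma ball_perm:
  assumes "finite A" "A \<noteq> {}"
  shows "(\<forall>k\<in>permutations_of_set A. Q k) \<longleftrightarrow> (\<forall>x\<in>A. \<forall>xs\<in>permutations_of_set (A - {x}). Q (x#xs))"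
  using permutations_of_set_nonempty[OF assms(2)] by auto

lemma ball_perm2: "a \<noteq> b \<Longrightarrow> (\<forall>k\<in>permutations_of_set {a,b}. Q k) \<longleftrightarrow> Q [a,b] \<and> Q [b,a]"
  by (simp add: permutations_of_set_doubleton)

lemma ball_perm3:
  assumes "distinct [a,b,c]"
  shows "(\<forall>k\<in>permutations_of_set {a,b,c}. Q k) \<longleftrightarrow>
    Q [a,b,c] \<and> Q [a,c,b] \<and> Q [b,a,c] \<and> Q [b,c,a] \<and> Q [c,a,b] \<and> Q [c,b,a]"
proof -
  have e: "{a,b,c} - {a} = {b,c}" "{a,b,c} - {b} = {a,c}" "{a,b,c} - {c} = {a,b}" using assms by auto
  show ?thesis
    by (subst ball_perm) (use assms in \<open>simp_all add: e ball_perm2\<close>)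
qed

lemma ball_perm4:
  assumes "distinct [a,b,c,d]"
  shows "(\<forall>k\<in>permutations_of_set {a,b,c,d}. Q k) \<longleftrightarrow>
    Q [a,b,c,d] \<and> Q [a,b,d,c] \<and> Q [a,c,b,d] \<and> Q [a,c,d,b] \<and> Q [a,d,b,c] \<and> Q [a,d,c,b] \<and>
    Q [b,a,c,d] \<and> Q [b,a,d,c] \<and> Q [b,c,a,d] \<and> Q [b,c,d,a] \<and> Q [b,d,a,c] \<and> Q [b,d,c,a] \<and>
    Q [c,a,b,d] \<and> Q [c,a,d,b] \<and> Q [c,b,a,d] \<and> Q [c,b,d,a] \<and> Q [c,d,a,b] \<and> Q [c,d,b,a] \<and>
    Q [d,a,b,c] \<and> Q [d,a,c,b] \<and> Q [d,b,a,c] \<and> Q [d,b,c,a] \<and> Q [d,c,a,b] \<and> Q [d,c,b,a]"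
proof -
  have e: "{a,b,c,d} - {a} = {b,c,d}" "{a,b,c,d} - {b} = {a,c,d}" "{a,b,c,d} - {c} = {a,b,d}"
     "{a,b,c,d} - {d} = {a,b,c}" using assms by auto
  have d3: "distinct [b,c,d]" "distinct [a,c,d]" "distinct [a,b,d]" "distinct [a,b,c]" using assms by auto
  show ?thesis
    by (subst ball_perm) (use assms in \<open>simp_all add: e ball_perm3[OF d3(1)] ball_perm3[OF d3(2)] ball_perm3[OF d3(3)] ball_perm3[OF d3(4)] conj_assoc\<close>)
qed

lemma mem4: "a \<in> {a,b,c,d}" "b \<in> {a,b,c,d}" "c \<in> {a,b,c,d}" "d \<in> {a,b,c,d}"
  by simp_all

locale psca =
  fixes n lam N :: nat and y :: "nat \<Rightarrow> nat list"
  assumes n4: "4 \<le> n"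
    and perm: "\<And>i. i < N \<Longrightarrow> y i \<in> perms n"
    and cnt: "\<And>k. k \<in> kseqs n 4 \<Longrightarrow> card {i. i < N \<and> subseq k (y i)} = lam"
begin

lemma master:
  assumes d: "distinct [a,b,c,d]" and s: "{a,b,c,d} \<subseteq> {1..n}"
  shows "(\<Sum>i<N. F (filter (\<lambda>v. v \<in> {a,b,c,d}) (y i))) = real lam * sum F (permutations_of_set {a,b,c,d})"
proof -
  define P where "P = permutations_of_set {a,b,c,d}"
  define f where "f i = filter (\<lambda>v. v \<in> {a,b,c,d}) (y i)" for i
  have fin: "\<And>i. i < N \<Longrightarrow> f i \<in> P"
    unfolding f_def P_def using perm s by (auto simp: perms_def permutations_of_set_def)
  have finP: "finite P" unfolding P_def by simp
  have kk: "\<And>k. k \<in> P \<Longrightarrow> k \<in> kseqs n 4 \<and> distinct k \<and> set k = {a,b,c,d}"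
  proof -
    fix k assume "k \<in> P"
    then have "distinct k" "set k = {a,b,c,d}" unfolding P_def by (auto simp: permutations_of_set_def)
    moreover then have "length k = 4" using d distinct_card[of k] by simp
    ultimately show "k \<in> kseqs n 4 \<and> distinct k \<and> set k = {a,b,c,d}" using s by (simp add: kseqs_def)
  qed
  have "(\<Sum>i<N. F (f i)) = (\<Sum>i<N. \<Sum>k\<in>P. (if f i = k then F k else 0))"
    by (rule sum.cong) (auto simp: fin finP)
  also have "\<dots> = (\<Sum>k\<in>P. \<Sum>i<N. (if f i = k then F k else 0))"
    by (rule sum.swap)
  also have "\<dots> = (\<Sum>k\<in>P. F k * real lam)"
  proof (rule sum.cong)
    fix k assume k: "k \<in> P"
    have "(\<Sum>i<N. (if f i = k then F k else 0)) = (\<Sum>i\<in>{i. i < N \<and> f i = k}. F k)"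
      by (simp add: sum.If_cases lessThan_def Collect_conj_eq Int_commute)
    also have "\<dots> = F k * real (card {i. i < N \<and> f i = k})" by simp
    also have "{i. i < N \<and> f i = k} = {i. i < N \<and> subseq k (y i)}"
    proof -
      have "\<And>i. i < N \<Longrightarrow> subseq k (y i) \<longleftrightarrow> f i = k"
        unfolding f_def
        apply (rule filter_subseq_iff[OF perm])
        using kk[OF k] s by (auto simp: kseqs_def)
      then show ?thesis by auto
    qed
    finally show "(\<Sum>i<N. (if f i = k then F k else 0)) = F k * real lam"
      using cnt kk[OF k] by simp
  qed simp
  also have "\<dots> = real lam * sum F P"
    by (simp add: sum_distrib_left mult.commute)
  finally show ?thesis unfolding f_def P_def .
qed

lemma sum_filter4:
  assumes d: "distinct [a,b,c,d]" and s: "{a,b,c,d} \<subseteq> {1..n}"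
    and F: "\<And>i. i < N \<Longrightarrow> G (y i) = F (filter (\<lambda>v. v \<in> {a,b,c,d}) (y i))"
  shows "(\<Sum>i<N. G (y i)) = real lam * sum F (permutations_of_set {a,b,c,d})"
  using master[OF d s, of F] F by simp

lemma statB:
  assumes d: "distinct [a,b,c,d]" and s: "{a,b,c,d} \<subseteq> {1..n}"
  shows "(\<Sum>i<N. sg (y i) a b * sg (y i) c d) = 0"
proof -
  have "(\<Sum>i<N. sg (y i) a b * sg (y i) c d) = real lam * sum (\<lambda>k. sg k a b * sg k c d) (permutations_of_set {a,b,c,d})"
    by (rule sum_filter4[OF d s]) (simp only: sg_filter[OF mem4(1) mem4(2), symmetric] sg_filter[OF mem4(3) mem4(4), symmetric])
  also have "\<dots> = 0" by (simp only: perm4_sum[OF d]) (use d in \<open>simp add: sg_def\<close>)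
  finally show ?thesis .
qed

lemma statC:
  assumes d: "distinct [a,b,c,d]" and s: "{a,b,c,d} \<subseteq> {1..n}"
  shows "(\<Sum>i<N. cyc (y i) a b c * sg (y i) a d) = 0"
proof -
  have "(\<Sum>i<N. cyc (y i) a b c * sg (y i) a d) = real lam * sum (\<lambda>k. cyc k a b c * sg k a d) (permutations_of_set {a,b,c,d})"
    by (rule sum_filter4[OF d s]) (simp only: cyc_filter[OF mem4(1) mem4(2) mem4(3), symmetric] cyc_filter[OF mem4(1) mem4(2) mem4(4), symmetric] sg_filter[OF mem4(1) mem4(4), symmetric])
  also have "\<dots> = 0" by (simp only: perm4_sum[OF d]) (use d in \<open>simp add: sg_def cyc_def\<close>)
  finally show ?thesis .
qed

lemma statD:
  assumes d: "distinct [a,b,c,d]" and s: "{a,b,c,d} \<subseteq> {1..n}"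
  shows "(\<Sum>i<N. cyc (y i) a b c * cyc (y i) a b d) = 8 * real lam"
proof -
  have "(\<Sum>i<N. cyc (y i) a b c * cyc (y i) a b d) = real lam * sum (\<lambda>k. cyc k a b c * cyc k a b d) (permutations_of_set {a,b,c,d})"
    by (rule sum_filter4[OF d s]) (simp only: cyc_filter[OF mem4(1) mem4(2) mem4(3), symmetric] cyc_filter[OF mem4(1) mem4(2) mem4(4), symmetric] sg_filter[OF mem4(1) mem4(4), symmetric])
  also have "\<dots> = 8 * real lam" by (simp only: perm4_sum[OF d]) (use d in \<open>simp add: sg_def cyc_def\<close>)
  finally show ?thesis .
qed

lemma statN: "real N = 24 * real lam"
proof -
  have d: "distinct [1,2,3,4::nat]" and s: "{1,2,3,4::nat} \<subseteq> {1..n}" using n4 by auto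
  have "(\<Sum>i<N. (\<lambda>_. 1::real) (y i)) = real lam * sum (\<lambda>_. 1) (permutations_of_set {1,2,3,4::nat})"
    by (rule sum_filter4[OF d s]) simp
  then show ?thesis by (simp only: perm4_sum[OF d]) simp
qed

lemma pointwise:
  assumes x: "x \<in> perms n" and d: "distinct [a,b,c,d]" and s: "{a,b,c,d} \<subseteq> {1..n}"
  shows "(cyc x a b c)^2 = 1" "sg x a b = - sg x b a"
proof -
  have m: "filter (\<lambda>v. v \<in> {a,b,c,d}) x \<in> permutations_of_set {a,b,c,d}"
    using x s by (auto simp: perms_def permutations_of_set_def)
  have "\<forall>k\<in>permutations_of_set {a,b,c,d}. (cyc k a b c)^2 = 1 \<and> sg k a b = - sg k b a"
  proof -
    show ?thesis by (simp only: ball_perm4[OF d]) (use d in \<open>simp add: sg_def cyc_def\<close>)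
  qed
  then have "(cyc (filter (\<lambda>v. v \<in> {a,b,c,d}) x) a b c)^2 = 1 \<and>
     sg (filter (\<lambda>v. v \<in> {a,b,c,d}) x) a b = - sg (filter (\<lambda>v. v \<in> {a,b,c,d}) x) b a"
    using m by blast
  then show "(cyc x a b c)^2 = 1" "sg x a b = - sg x b a"
    by (simp_all only: cyc_filter[OF mem4(1) mem4(2) mem4(3), symmetric] sg_filter[OF mem4(1) mem4(2), symmetric] sg_filter[OF mem4(2) mem4(1), symmetric])
qed

end

lemma extra_elem:
  assumes "A \<subseteq> {1..n::nat}" "card A < n"
  shows "\<exists>d\<in>{1..n}. d \<notin> A"
proof (rule ccontr)
  assume "\<not> ?thesis"
  then have "{1..n} \<subseteq> A" by auto
  then have "card {1..n} \<le> card A" using assms by (meson card_mono finite_atLeastAtMost finite_subset)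
  then show False using assms by simp
qed

context psca begin

lemma cyc_sq:
  assumes x: "x \<in> perms n" and d: "distinct [a,b,c]" and s: "{a,b,c} \<subseteq> {1..n}"
  shows "(cyc x a b c)^2 = 1"
proof -
  have "card {a,b,c} < n" using d n4 by (simp add: card_insert_if)
  then obtain e where "e \<in> {1..n}" "e \<notin> {a,b,c}" using extra_elem[OF s] by blast
  then show ?thesis using pointwise(1)[OF x, of a b c e] d s by auto
qed

lemma sg_anti:
  assumes x: "x \<in> perms n" and d: "u \<noteq> v" and s: "u \<in> {1..n}" "v \<in> {1..n}"
  shows "sg x u v = - sg x v u"
proof -
  have "card {u,v} < n" using d n4 by (simp add: card_insert_if)
  then obtain e where e: "e \<in> {1..n}" "e \<notin> {u,v}" using extra_elem[of "{u,v}" n] s by blast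
  have "card {u,v,e} < n" using d n4 e by (simp add: card_insert_if)
  then obtain f where f: "f \<in> {1..n}" "f \<notin> {u,v,e}" using extra_elem[of "{u,v,e}" n] s e by blast
  show ?thesis using pointwise(2)[OF x, of u v e f] d s e f by auto
qed

lemma cyc_rot: "cyc x a b c = cyc x b c a" "cyc x a b c = cyc x c a b"
  by (simp_all add: cyc_def)

lemma cyc_swap:
  assumes x: "x \<in> perms n" and d: "distinct [a,b,c]" and s: "{a,b,c} \<subseteq> {1..n}"
  shows "cyc x a c b = - cyc x a b c"
  using sg_anti[OF x, of a b] sg_anti[OF x, of b c] sg_anti[OF x, of c a] d s
  by (simp add: cyc_def)

lemma cyc_sign:
  assumes d: "distinct [a,b,c]" and s: "{a,b,c} \<subseteq> {1..n}"
    and dp: "distinct [p,q,r]" and e: "{p,q,r} = {a,b,c}"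
  shows "\<exists>\<sigma>::real. (\<sigma> = 1 \<or> \<sigma> = -1) \<and> (\<forall>x\<in>perms n. cyc x p q r = \<sigma> * cyc x a b c)"
proof -
  have "(p=a\<and>q=b\<and>r=c) \<or> (p=b\<and>q=c\<and>r=a) \<or> (p=c\<and>q=a\<and>r=b) \<or>
        (p=a\<and>q=c\<and>r=b) \<or> (p=c\<and>q=b\<and>r=a) \<or> (p=b\<and>q=a\<and>r=c)"
  proof -
    have "p \<in> {a,b,c}" "q \<in> {a,b,c}" "r \<in> {a,b,c}" using e by blast+
    then have "p=a \<or> p=b \<or> p=c" "q=a \<or> q=b \<or> q=c" "r=a \<or> r=b \<or> r=c" by simp_all
    then show ?thesis using dp d by (elim disjE) simp_all
  qed
  then show ?thesis
  proof (elim disjE)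
    assume "p=a\<and>q=b\<and>r=c" then show ?thesis by (intro exI[of _ 1]) simp
  next
    assume "p=b\<and>q=c\<and>r=a" then show ?thesis by (intro exI[of _ 1]) (simp add: cyc_rot)
  next
    assume "p=c\<and>q=a\<and>r=b" then show ?thesis by (intro exI[of _ 1]) (simp add: cyc_rot)
  next
    assume "p=a\<and>q=c\<and>r=b" then show ?thesis
      using cyc_swap[of _ a b c] d s by (intro exI[of _ "-1"]) simp
  next
    assume "p=c\<and>q=b\<and>r=a" then show ?thesis
    proof (intro exI[of _ "-1"] conjI ballI)
      fix x assume "x \<in> perms n"
      moreover have "cyc x c b a = cyc x a c b" by (simp add: cyc_def)
      ultimately show "cyc x p q r = -1 * cyc x a b c" using cyc_swap[of x a b c] d s \<open>p=c\<and>q=b\<and>r=a\<close> by simp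
    qed simp
  next
    assume "p=b\<and>q=a\<and>r=c" then show ?thesis
    proof (intro exI[of _ "-1"] conjI ballI)
      fix x assume "x \<in> perms n"
      moreover have "cyc x b a c = cyc x a c b" by (simp add: cyc_def)
      ultimately show "cyc x p q r = -1 * cyc x a b c" using cyc_swap[of x a b c] d s \<open>p=b\<and>q=a\<and>r=c\<close> by simp
    qed simp
  qed
qed

end

context psca begin

lemma E1:
  assumes d: "distinct [a,b,c]" and s: "{a,b,c} \<subseteq> {1..n}" and p: "p \<in> {a,b,c}"
    and q: "q \<notin> {a,b,c}" "q \<in> {1..n}"
  shows "(\<Sum>i<N. cyc (y i) a b c * sg (y i) p q) = 0"
proof -
  from p have "p = a \<or> p = b \<or> p = c" by simp
  then show ?thesis
  proof (elim disjE)
    assume "p = a" then show ?thesis using statC[of a b c q] d s q by simp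
  next
    assume "p = b"
    have "(\<Sum>i<N. cyc (y i) a b c * sg (y i) p q) = (\<Sum>i<N. cyc (y i) b c a * sg (y i) b q)"
      using \<open>p = b\<close> by (simp add: cyc_def add_ac)
    then show ?thesis using statC[of b c a q] d s q by simp
  next
    assume "p = c"
    have "(\<Sum>i<N. cyc (y i) a b c * sg (y i) p q) = (\<Sum>i<N. cyc (y i) c a b * sg (y i) c q)"
      using \<open>p = c\<close> by (simp add: cyc_def add_ac)
    then show ?thesis using statC[of c a b q] d s q by simp
  qed
qed

lemma Eedge:
  assumes d: "distinct [a,b,c]" and s: "{a,b,c} \<subseteq> {1..n}" and pq: "p \<noteq> q" "p \<in> {1..n}" "q \<in> {1..n}"
    and nb: "\<not> (p \<in> {a,b,c} \<and> q \<in> {a,b,c})"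
  shows "(\<Sum>i<N. cyc (y i) a b c * sg (y i) p q) = 0"
proof (cases "p \<in> {a,b,c}")
  case True
  then show ?thesis using E1[OF d s True] nb pq by blast
next
  case pn: False
  show ?thesis
  proof (cases "q \<in> {a,b,c}")
    case True
    have "(\<Sum>i<N. cyc (y i) a b c * sg (y i) p q) = - (\<Sum>i<N. cyc (y i) a b c * sg (y i) q p)"
      unfolding sum_negf[symmetric]
      by (rule sum.cong) (use sg_anti[OF perm, of _ p q] pq in auto)
    then show ?thesis using E1[OF d s True pn] pq by simp
  next
    case False
    have "(\<Sum>i<N. cyc (y i) a b c * sg (y i) p q) =
      (\<Sum>i<N. sg (y i) a b * sg (y i) p q) + (\<Sum>i<N. sg (y i) b c * sg (y i) p q) + (\<Sum>i<N. sg (y i) c a * sg (y i) p q)"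
      by (simp add: cyc_def sum.distrib algebra_simps)
    moreover have "(\<Sum>i<N. sg (y i) a b * sg (y i) p q) = 0" by (rule statB) (use d s pq pn False in auto)
    moreover have "(\<Sum>i<N. sg (y i) b c * sg (y i) p q) = 0" by (rule statB) (use d s pq pn False in auto)
    moreover have "(\<Sum>i<N. sg (y i) c a * sg (y i) p q) = 0" by (rule statB) (use d s pq pn False in auto)
    ultimately show ?thesis by simp
  qed
qed

definition cl :: "nat list \<Rightarrow> nat list \<Rightarrow> real" where
  "cl t x = cyc x (t!0) (t!1) (t!2)"

definition CC :: "nat list \<Rightarrow> nat list \<Rightarrow> real" where
  "CC t t' = (\<Sum>i<N. cl t (y i) * cl t' (y i))"

lemma kseq3: "t \<in> kseqs n 3 \<Longrightarrow> \<exists>a b c. t = [a,b,c] \<and> distinct [a,b,c] \<and> {a,b,c} \<subseteq> {1..n}"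
  unfolding kseqs_def
  by (cases t; cases "tl t"; cases "tl (tl t)") (auto simp: numeral_eq_Suc)

lemma CZ:
  assumes t: "t = [a,b,c]" "distinct [a,b,c]" "{a,b,c} \<subseteq> {1..n}"
    and t': "t' = [p,q,r]" "distinct [p,q,r]" "{p,q,r} \<subseteq> {1..n}"
    and c: "card ({a,b,c} \<inter> {p,q,r}) \<le> 1"
  shows "CC t t' = 0"
proof -
  have nb: "\<not> (u \<in> {a,b,c} \<and> v \<in> {a,b,c})" if "u \<in> {p,q,r}" "v \<in> {p,q,r}" "u \<noteq> v" for u v
  proof
    assume "u \<in> {a,b,c} \<and> v \<in> {a,b,c}"
    then have "{u,v} \<subseteq> {a,b,c} \<inter> {p,q,r}" using that by auto
    then have "card {u,v} \<le> card ({a,b,c} \<inter> {p,q,r})" by (intro card_mono) auto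
    then show False using c that by simp
  qed
  have "CC t t' = (\<Sum>i<N. cyc (y i) a b c * sg (y i) p q) + (\<Sum>i<N. cyc (y i) a b c * sg (y i) q r)
     + (\<Sum>i<N. cyc (y i) a b c * sg (y i) r p)"
    unfolding CC_def cl_def t t' by (simp add: cyc_def sum.distrib algebra_simps)
  also have "\<dots> = 0"
    using Eedge[OF t(2,3), of p q] Eedge[OF t(2,3), of q r] Eedge[OF t(2,3), of r p] nb t' by auto
  finally show ?thesis .
qed

lemma C3:
  assumes t: "t = [a,b,c]" "distinct [a,b,c]" "{a,b,c} \<subseteq> {1..n}"
    and t': "t' = [p,q,r]" "distinct [p,q,r]" and e: "{p,q,r} = {a,b,c}"
  shows "(CC t t')^2 = (real N)^2"
proof -
  obtain \<sigma> where sg: "\<sigma> = 1 \<or> \<sigma> = -1" "\<forall>x\<in>perms n. cyc x p q r = \<sigma> * cyc x a b c"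
    using cyc_sign[OF t(2,3) t'(2) e] by blast
  have "CC t t' = (\<Sum>i<N. \<sigma>)"
    unfolding CC_def cl_def t t'
    apply (rule sum.cong, simp)
    using sg(2) perm cyc_sq[OF perm t(2,3)] by (simp add: power2_eq_square)
  then show ?thesis using sg(1) by auto
qed

lemma C2:
  assumes t: "t = [a,b,c]" "distinct [a,b,c]" "{a,b,c} \<subseteq> {1..n}"
    and t': "t' = [p,q,r]" "distinct [p,q,r]" "{p,q,r} \<subseteq> {1..n}"
    and c: "card ({a,b,c} \<inter> {p,q,r}) = 2"
  shows "(CC t t')^2 = 64 * (real lam)^2"
proof -
  obtain u v where uv: "{a,b,c} \<inter> {p,q,r} = {u,v}" "u \<noteq> v" using c by (meson card_2_iff)
  obtain w where w: "w \<in> {a,b,c}" "w \<notin> {p,q,r}"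
  proof -
    have "\<not> {a,b,c} \<subseteq> {p,q,r}"
    proof
      assume "{a,b,c} \<subseteq> {p,q,r}"
      then have "{a,b,c} \<inter> {p,q,r} = {a,b,c}" by auto
      then show False using c t(2) by simp
    qed
    then show ?thesis using that by blast
  qed
  obtain z where z: "z \<in> {p,q,r}" "z \<notin> {a,b,c}"
  proof -
    have "\<not> {p,q,r} \<subseteq> {a,b,c}"
    proof
      assume "{p,q,r} \<subseteq> {a,b,c}"
      then have "{a,b,c} \<inter> {p,q,r} = {p,q,r}" by auto
      then show False using c t'(2) by simp
    qed
    then show ?thesis using that by blast
  qed
  have uvin: "u \<in> {a,b,c}" "v \<in> {a,b,c}" "u \<in> {p,q,r}" "v \<in> {p,q,r}" using uv(1) by blast+
  have "w \<noteq> u" "w \<noteq> v" using w(2) uvin(3,4) by blast+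
  moreover have "z \<noteq> u" "z \<noteq> v" "w \<noteq> z" using z(2) uvin(1,2) w(1) by blast+
  ultimately have dd: "distinct [u,v,w,z]" using uv(2) by simp
  have e1: "{u,v,w} = {a,b,c}"
  proof (rule card_subset_eq)
    show "{u,v,w} \<subseteq> {a,b,c}" using uvin w by auto
    show "card {u,v,w} = card {a,b,c}" using dd t(2) by simp
  qed simp
  have e2: "{u,v,z} = {p,q,r}"
  proof (rule card_subset_eq)
    show "{u,v,z} \<subseteq> {p,q,r}" using uvin z by auto
    show "card {u,v,z} = card {p,q,r}" using dd t'(2) by simp
  qed simp
  have s4: "{u,v,w,z} \<subseteq> {1..n}" using uvin(1,2) w(1) z(1) t(3) t'(3) by blast
  have d3: "distinct [u,v,w]" "distinct [u,v,z]" using dd by simp_all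
  have s3: "{u,v,w} \<subseteq> {1..n}" "{u,v,z} \<subseteq> {1..n}" using s4 by blast+
  obtain \<sigma>1 where s1: "\<sigma>1 = 1 \<or> \<sigma>1 = -1" "\<forall>x\<in>perms n. cyc x a b c = \<sigma>1 * cyc x u v w"
    using cyc_sign[OF d3(1) s3(1) t(2) e1[symmetric]] by blast
  obtain \<sigma>2 where s2: "\<sigma>2 = 1 \<or> \<sigma>2 = -1" "\<forall>x\<in>perms n. cyc x p q r = \<sigma>2 * cyc x u v z"
    using cyc_sign[OF d3(2) s3(2) t'(2) e2[symmetric]] by blast
  have "CC t t' = \<sigma>1 * \<sigma>2 * (\<Sum>i<N. cyc (y i) u v w * cyc (y i) u v z)"
    unfolding CC_def cl_def t t' sum_distrib_left
    apply (rule sum.cong, simp)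
    using s1(2) s2(2) perm by simp
  also have "\<dots> = \<sigma>1 * \<sigma>2 * (8 * real lam)" using statD[OF dd s4] by simp
  finally show ?thesis using s1(1) s2(1) by (auto simp: power2_eq_square)
qed

end

lemma sq_swap:
  fixes f :: "'a \<Rightarrow> nat \<Rightarrow> real"
  shows "(\<Sum>i\<in>I. \<Sum>j\<in>I. (\<Sum>t\<in>T. f t i * f t j)^2) = (\<Sum>t\<in>T. \<Sum>t'\<in>T. (\<Sum>i\<in>I. f t i * f t' i)^2)"
proof -
  define g where "g i j t t' = f t i * f t' i * (f t j * f t' j)" for i j t t'
  have L: "(\<Sum>t\<in>T. f t i * f t j)^2 = (\<Sum>t\<in>T. \<Sum>t'\<in>T. g i j t t')" for i j
    by (simp add: power2_eq_square sum_product g_def algebra_simps)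
  have R: "(\<Sum>i\<in>I. f t i * f t' i)^2 = (\<Sum>i\<in>I. \<Sum>j\<in>I. g i j t t')" for t t'
    by (simp add: power2_eq_square sum_product g_def)
  have "(\<Sum>i\<in>I. \<Sum>j\<in>I. \<Sum>t\<in>T. \<Sum>t'\<in>T. g i j t t') = (\<Sum>i\<in>I. \<Sum>t\<in>T. \<Sum>j\<in>I. \<Sum>t'\<in>T. g i j t t')"
    by (rule sum.cong[OF refl], rule sum.swap)
  also have "\<dots> = (\<Sum>i\<in>I. \<Sum>t\<in>T. \<Sum>t'\<in>T. \<Sum>j\<in>I. g i j t t')"
    by (rule sum.cong[OF refl], rule sum.cong[OF refl], rule sum.swap)
  also have "\<dots> = (\<Sum>t\<in>T. \<Sum>i\<in>I. \<Sum>t'\<in>T. \<Sum>j\<in>I. g i j t t')"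
    by (rule sum.swap)
  also have "\<dots> = (\<Sum>t\<in>T. \<Sum>t'\<in>T. \<Sum>i\<in>I. \<Sum>j\<in>I. g i j t t')"
    by (rule sum.cong[OF refl], rule sum.swap)
  finally show ?thesis by (simp add: L R)
qed

context psca begin

lemma finTr: "finite (kseqs n 3)"
proof -
  have "kseqs n 3 \<subseteq> {xs. set xs \<subseteq> {1..n} \<and> length xs = 3}" by (auto simp: kseqs_def)
  then show ?thesis by (rule finite_subset) (rule finite_lists_length_eq, simp)
qed

lemma cardTr: "card (kseqs n 3) = n * (n-1) * (n-2)"
proof -
  have "kseqs n 3 = {xs. length xs = 3 \<and> distinct xs \<and> set xs \<subseteq> {1..n}}" by (auto simp: kseqs_def)
  then have "card (kseqs n 3) = \<Prod>{n - 3 + 1 .. n}" using card_lists_distinct_length_eq[of "{1..n}" 3] n4 by simp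
  also have "{n - 3 + 1 .. n} = {n-2, n-1, n}" using n4 by auto
  also have "\<Prod>{n-2, n-1, n} = n * (n-1) * (n-2)"
  proof -
    obtain m where m: "n = 4 + m" using le_Suc_ex[OF n4] by blast
    show ?thesis by (simp add: m mult_ac)
  qed
  finally show ?thesis .
qed

lemma cl_sq: "t \<in> kseqs n 3 \<Longrightarrow> i < N \<Longrightarrow> (cl t (y i))^2 = 1"
  using kseq3[of t] cyc_sq[OF perm] by (auto simp: cl_def)

lemma A3card:
  assumes "t \<in> kseqs n 3"
  shows "card {t'\<in>kseqs n 3. set t' = set t} \<le> 6"
proof -
  have "{t'\<in>kseqs n 3. set t' = set t} \<subseteq> permutations_of_set (set t)"
    by (auto simp: kseqs_def permutations_of_set_def)
  moreover have "card (permutations_of_set (set t)) = 6"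
    using assms distinct_card[of t] by (simp add: kseqs_def fact_numeral)
  ultimately show ?thesis by (metis card_mono finite_permutations_of_set)
qed

lemma A2card:
  assumes tt: "t \<in> kseqs n 3"
  shows "card {t'\<in>kseqs n 3. card (set t \<inter> set t') = 2} \<le> 18 * (n-3)"
proof -
  define W where "W = {1..n} - set t"
  define D where "D = {xs. length xs = 2 \<and> distinct xs \<and> set xs \<subseteq> set t}"
  have ct: "card (set t) = 3" "finite (set t)" using tt distinct_card[of t] by (auto simp: kseqs_def)
  have cW: "card W = n - 3" unfolding W_def
    using tt ct by (subst card_Diff_subset) (auto simp: kseqs_def)
  have cD: "card D = 6" unfolding D_def
    using card_lists_distinct_length_eq[of "set t" 2] ct by (simp add: numeral_eq_Suc)
  have fW: "finite W" unfolding W_def by simp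
  have fD: "finite D" unfolding D_def
    by (rule finite_subset[OF _ finite_lists_length_eq[OF ct(2), of 2]]) auto
  define f1 where "f1 = (\<lambda>(w::nat, xs::nat list). w # xs)"
  define f2 where "f2 = (\<lambda>(w::nat, xs::nat list). hd xs # w # tl xs)"
  define f3 where "f3 = (\<lambda>(w::nat, xs::nat list). xs @ [w])"
  have sub: "{t'\<in>kseqs n 3. card (set t \<inter> set t') = 2} \<subseteq> f1 ` (W \<times> D) \<union> f2 ` (W \<times> D) \<union> f3 ` (W \<times> D)"
  proof
    fix t' assume h: "t' \<in> {t'\<in>kseqs n 3. card (set t \<inter> set t') = 2}"
    then obtain p q r where t': "t' = [p,q,r]" "distinct [p,q,r]" "{p,q,r} \<subseteq> {1..n}"
      using kseq3 by blast
    have c2: "card (set t \<inter> {p,q,r}) = 2" using h t' by simp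
    have one: "card (set t \<inter> {p,q,r}) \<le> 1" if "u \<notin> set t" "v \<notin> set t" "u \<noteq> v" "u \<in> {p,q,r}" "v \<in> {p,q,r}" for u v
    proof -
      have "set t \<inter> {p,q,r} \<subseteq> {p,q,r} - {u,v}" using that by auto
      moreover have "card ({p,q,r} - {u,v}) = 1" using that t'(2) by (subst card_Diff_subset) auto
      ultimately show ?thesis using card_mono[of "{p,q,r} - {u,v}" "set t \<inter> {p,q,r}"] by simp
    qed
    have bad: False if "u \<notin> set t" "v \<notin> set t" "u \<noteq> v" "u \<in> {p,q,r}" "v \<in> {p,q,r}" for u v
      using one[OF that] c2 by simp
    have notall: "\<not> (p \<in> set t \<and> q \<in> set t \<and> r \<in> set t)"
    proof
      assume "p \<in> set t \<and> q \<in> set t \<and> r \<in> set t"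
      then have "set t \<inter> {p,q,r} = {p,q,r}" by auto
      then show False using c2 t'(2) by simp
    qed
    show "t' \<in> f1 ` (W \<times> D) \<union> f2 ` (W \<times> D) \<union> f3 ` (W \<times> D)"
    proof (cases "p \<in> set t")
      case False
      then have "q \<in> set t" "r \<in> set t" using bad[of p q] bad[of p r] False t'(2) by auto
      then have "(p, [q,r]) \<in> W \<times> D" using False t' unfolding W_def D_def by auto
      then show ?thesis unfolding f1_def t'(1) by (auto intro: image_eqI[where x="(p,[q,r])"])
    next
      case pT: True
      show ?thesis
      proof (cases "q \<in> set t")
        case False
        then have "r \<in> set t" using bad[of q r] False t'(2) by auto
        then have "(q, [p,r]) \<in> W \<times> D" using False pT t' unfolding W_def D_def by auto
        then have "f2 (q, [p,r]) \<in> f2 ` (W \<times> D)" by blast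
        then show ?thesis unfolding f2_def t'(1) by auto
      next
        case qT: True
        then have "r \<notin> set t" using notall pT by blast
        then have "(r, [p,q]) \<in> W \<times> D" using pT qT t' unfolding W_def D_def by auto
        then have "f3 (r, [p,q]) \<in> f3 ` (W \<times> D)" by blast
        then show ?thesis unfolding f3_def t'(1) by auto
      qed
    qed
  qed
  have "card {t'\<in>kseqs n 3. card (set t \<inter> set t') = 2} \<le> card (f1 ` (W \<times> D) \<union> f2 ` (W \<times> D) \<union> f3 ` (W \<times> D))"
    by (rule card_mono[OF _ sub]) (simp add: fW fD)
  also have "\<dots> \<le> card (f1 ` (W \<times> D)) + card (f2 ` (W \<times> D)) + card (f3 ` (W \<times> D))"
    by (meson add_le_mono card_Un_le le_refl order_trans)
  also have "\<dots> \<le> card (W \<times> D) + card (W \<times> D) + card (W \<times> D)"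
    by (intro add_le_mono card_image_le) (simp_all add: fW fD)
  also have "\<dots> = 18 * (n-3)" using cW cD by (simp add: card_cartesian_product)
  finally show ?thesis .
qed

end

context psca begin

lemma CC_bound:
  assumes t: "t \<in> kseqs n 3" and t': "t' \<in> kseqs n 3"
  shows "(CC t t')^2 \<le> (if set t' = set t then (real N)^2 else 0) +
            (if card (set t \<inter> set t') = 2 then 64 * (real lam)^2 else 0)"
proof -
  obtain a b c where tt: "t = [a,b,c]" "distinct [a,b,c]" "{a,b,c} \<subseteq> {1..n}" using kseq3[OF t] by blast
  obtain p q r where tt': "t' = [p,q,r]" "distinct [p,q,r]" "{p,q,r} \<subseteq> {1..n}" using kseq3[OF t'] by blast
  have le3: "card ({a,b,c} \<inter> {p,q,r}) \<le> 3"
    using card_mono[of "{a,b,c}" "{a,b,c} \<inter> {p,q,r}"] tt(2) by simp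
  consider "card ({a,b,c} \<inter> {p,q,r}) = 3" | "card ({a,b,c} \<inter> {p,q,r}) = 2" | "card ({a,b,c} \<inter> {p,q,r}) \<le> 1"
    using le3 by linarith
  then show ?thesis
  proof cases
    case 1
    have "{a,b,c} \<inter> {p,q,r} = {a,b,c}"
      by (rule card_subset_eq) (use 1 tt(2) in auto)
    moreover have "{a,b,c} \<inter> {p,q,r} = {p,q,r}"
      by (rule card_subset_eq) (use 1 tt'(2) in auto)
    ultimately have e: "{p,q,r} = {a,b,c}" by simp
    have "(CC t t')^2 = (real N)^2" by (rule C3[OF tt tt'(1,2) e])
    then show ?thesis using e 1 tt tt' by simp
  next
    case 2
    have "(CC t t')^2 = 64 * (real lam)^2" by (rule C2[OF tt tt' 2])
    moreover have "set t' \<noteq> set t"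
    proof
      assume "set t' = set t"
      then have "{a,b,c} \<inter> {p,q,r} = {a,b,c}" using tt tt' by auto
      then show False using 2 tt(2) by simp
    qed
    ultimately show ?thesis using 2 tt tt' by simp
  next
    case 3
    have "CC t t' = 0" by (rule CZ[OF tt tt' 3])
    then show ?thesis by simp
  qed
qed

lemma sum_indic:
  assumes "finite A"
  shows "(\<Sum>x\<in>A. if P x then (c::real) else 0) = c * real (card {x\<in>A. P x})"
  using sum.inter_filter[OF assms, of "\<lambda>_. c" P] by (simp add: mult.commute)

lemma row_bound:
  assumes t: "t \<in> kseqs n 3"
  shows "(\<Sum>t'\<in>kseqs n 3. (CC t t')^2) \<le> 6 * (real N)^2 + 64 * (real lam)^2 * (18 * (real n - 3))"
proof -
  have "(\<Sum>t'\<in>kseqs n 3. (CC t t')^2) \<le> (\<Sum>t'\<in>kseqs n 3. (if set t' = set t then (real N)^2 else 0) +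
            (if card (set t \<inter> set t') = 2 then 64 * (real lam)^2 else 0))"
    by (rule sum_mono) (rule CC_bound[OF t])
  also have "\<dots> = (real N)^2 * real (card {t'\<in>kseqs n 3. set t' = set t})
      + 64 * (real lam)^2 * real (card {t'\<in>kseqs n 3. card (set t \<inter> set t') = 2})"
    by (simp add: sum.distrib sum_indic finTr)
  also have "\<dots> \<le> (real N)^2 * 6 + 64 * (real lam)^2 * (18 * (real n - 3))"
  proof (rule add_mono)
    show "(real N)^2 * real (card {t'\<in>kseqs n 3. set t' = set t}) \<le> (real N)^2 * 6"
      using A3card[OF t] by (intro mult_left_mono) auto
    have "real (card {t'\<in>kseqs n 3. card (set t \<inter> set t') = 2}) \<le> real (18 * (n - 3))"
      using A2card[OF t] by linarith
    also have "\<dots> = 18 * (real n - 3)" using n4 by (simp add: of_nat_diff)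
    finally show "64 * (real lam)^2 * real (card {t'\<in>kseqs n 3. card (set t \<inter> set t') = 2}) \<le> 64 * (real lam)^2 * (18 * (real n - 3))"
      by (intro mult_left_mono) auto
  qed
  finally show ?thesis by simp
qed

lemma key:
  assumes lpos: "0 < lam"
  shows "(real n - 1) * (real n - 2) \<le> 48 * real lam"
proof -
  define T where "T = kseqs n 3"
  define M where "M = real (card T)"
  define f where "f t i = cl t (y i)" for t i
  have fT: "finite T" unfolding T_def by (rule finTr)
  have M: "M = real n * (real n - 1) * (real n - 2)"
    unfolding M_def T_def cardTr using n4 by (simp add: of_nat_diff)
  have Mpos: "M > 0" unfolding M using n4 by simp
  define S where "S = (\<Sum>i<N. \<Sum>j<N. (\<Sum>t\<in>T. f t i * f t j)^2)"
  have S1: "S = (\<Sum>t\<in>T. \<Sum>t'\<in>T. (CC t t')^2)"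
    unfolding S_def sq_swap CC_def f_def by simp
  have diag: "(\<Sum>t\<in>T. f t i * f t i) = M" if "i < N" for i
  proof -
    have "(\<Sum>t\<in>T. f t i * f t i) = (\<Sum>t\<in>T. 1)"
      by (rule sum.cong) (use cl_sq that in \<open>auto simp: f_def T_def power2_eq_square\<close>)
    then show ?thesis by (simp add: M_def)
  qed
  have "real N * M^2 = (\<Sum>i<N. (\<Sum>t\<in>T. f t i * f t i)^2)" using diag by simp
  also have "\<dots> \<le> S" unfolding S_def
  proof (rule sum_mono)
    fix i assume "i \<in> {..<N}"
    then show "(\<Sum>t\<in>T. f t i * f t i)^2 \<le> (\<Sum>j<N. (\<Sum>t\<in>T. f t i * f t j)^2)"
      using member_le_sum[of i "{..<N}" "\<lambda>j. (\<Sum>t\<in>T. f t i * f t j)^2"] by simp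
  qed
  also have "\<dots> \<le> (\<Sum>t\<in>T. 6 * (real N)^2 + 64 * (real lam)^2 * (18 * (real n - 3)))"
    unfolding S1 by (rule sum_mono) (use row_bound in \<open>auto simp: T_def\<close>)
  also have "\<dots> = M * (6 * (real N)^2 + 64 * (real lam)^2 * (18 * (real n - 3)))"
    by (simp add: M_def)
  finally have A: "real N * M^2 \<le> M * (6 * (real N)^2 + 64 * (real lam)^2 * (18 * (real n - 3)))" .
  have B: "real N * M \<le> 6 * (real N)^2 + 64 * (real lam)^2 * (18 * (real n - 3))"
    using A Mpos by (simp add: power2_eq_square mult.assoc mult.left_commute[of M])
  have C: "24 * real lam * M \<le> 24 * real lam * (48 * real n * real lam)"
    using B statN by (simp add: power2_eq_square algebra_simps)
  have D: "M \<le> 48 * real n * real lam" using C lpos by (simp add: mult_ac)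
  have "real n * ((real n - 1) * (real n - 2)) \<le> real n * (48 * real lam)"
    using D unfolding M by (simp add: algebra_simps)
  then show ?thesis using n4 by simp
qed

end

lemma map_zip_eq:
  "distinct p \<Longrightarrow> length p = length p' \<Longrightarrow> map (\<lambda>v. the (map_of (zip p p') v)) p = p'"
proof (induction p arbitrary: p')
  case Nil then show ?case by simp
next
  case (Cons a ps)
  then obtain b ps' where p': "p' = b # ps'" by (cases p') auto
  have e: "map (\<lambda>v. the (if v = a then Some b else map_of (zip ps ps') v)) ps = map (\<lambda>v. the (map_of (zip ps ps') v)) ps"
    using Cons.prems by (intro map_cong) auto
  have "map (\<lambda>v. the (map_of (zip ps ps') v)) ps = ps'" using Cons.IH Cons.prems by (simp add: p')
  then show ?case using e by (simp add: p')
qed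

definition ext :: "nat \<Rightarrow> nat list \<Rightarrow> nat list" where
  "ext n k = k @ filter (\<lambda>v. v \<notin> set k) [1..<n+1]"

lemma ext_perm: "k \<in> kseqs n m \<Longrightarrow> ext n k \<in> perms n"
  unfolding ext_def kseqs_def perms_def by auto

lemma finite_perms: "finite (perms n)"
proof -
  have "perms n \<subseteq> {xs. set xs \<subseteq> {1..n} \<and> length xs = n}"
    unfolding perms_def using distinct_card by fastforce
  then show ?thesis by (rule finite_subset) (rule finite_lists_length_eq, simp)
qed

lemma count_le:
  assumes k: "k \<in> kseqs n m" and k': "k' \<in> kseqs n m"
  shows "card {p\<in>perms n. subseq k p} \<le> card {p\<in>perms n. subseq k' p}"
proof -
  define p where "p = ext n k"
  define p' where "p' = ext n k'"
  have pp: "p \<in> perms n" "p' \<in> perms n" unfolding p_def p'_def using ext_perm k k' by auto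
  have "length p = n" "length p' = n" using pp distinct_card[of p] distinct_card[of p'] by (auto simp: perms_def)
  then have len: "length p = length p'" by simp
  define \<sigma> where "\<sigma> v = the (map_of (zip p p') v)" for v
  have mp: "map \<sigma> p = p'" unfolding \<sigma>_def using map_zip_eq pp len by (auto simp: perms_def)
  have inj: "inj_on \<sigma> {1..n}"
    using mp pp distinct_map[of \<sigma> p] by (auto simp: perms_def)
  have img: "\<sigma> ` {1..n} = {1..n}"
  proof -
    have "\<sigma> ` set p = set p'" using mp by (metis list.set_map)
    then show ?thesis using pp by (simp add: perms_def)
  qed
  have lk: "length k = m" "length k' = m" using k k' by (auto simp: kseqs_def)
  have "take m p = k" "take m p' = k'" unfolding p_def p'_def ext_def using lk by auto
  then have mk: "map \<sigma> k = k'" using mp by (metis take_map)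
  have "inj_on (map \<sigma>) {q\<in>perms n. subseq k q}"
  proof (rule inj_onI)
    fix q1 q2 assume "q1 \<in> {q\<in>perms n. subseq k q}" "q2 \<in> {q\<in>perms n. subseq k q}" "map \<sigma> q1 = map \<sigma> q2"
    then show "q1 = q2" using inj_on_map_eq_map[of \<sigma> q1 q2] inj by (auto simp: perms_def)
  qed
  moreover have "map \<sigma> ` {q\<in>perms n. subseq k q} \<subseteq> {q\<in>perms n. subseq k' q}"
  proof
    fix r assume "r \<in> map \<sigma> ` {q\<in>perms n. subseq k q}"
    then obtain q where q: "q \<in> perms n" "subseq k q" "r = map \<sigma> q" by blast
    have "distinct r" using q inj by (auto simp: perms_def distinct_map)
    moreover have "set r = {1..n}" using q img by (auto simp: perms_def)
    moreover have "subseq k' r" using subseq_map[OF q(2), of \<sigma>] mk q(3) by simp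
    ultimately show "r \<in> {q\<in>perms n. subseq k' q}" by (simp add: perms_def)
  qed
  ultimately show ?thesis
    by (intro card_inj_on_le[of "map \<sigma>"]) (auto simp: finite_perms)
qed

lemma PSCA_exists:
  assumes n4: "4 \<le> n"
  shows "\<exists>lam. 0 < lam \<and> (\<exists>X. is_PSCA n 4 lam X)"
proof -
  define k0 where "k0 = [1,2,3,4::nat]"
  have k0: "k0 \<in> kseqs n 4" unfolding k0_def kseqs_def using n4 by auto
  define lam where "lam = card {p\<in>perms n. subseq k0 p}"
  have "ext n k0 \<in> {p\<in>perms n. subseq k0 p}"
    using ext_perm[OF k0] by (auto simp: ext_def)
  then have pos: "0 < lam" unfolding lam_def
    by (metis (no_types, lifting) card_gt_0_iff empty_iff finite_perms finite_subset mem_Collect_eq subsetI)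
  have "is_PSCA n 4 lam (mset_set (perms n))"
    unfolding is_PSCA_def
  proof (intro conjI ballI)
    show "set_mset (mset_set (perms n)) \<subseteq> perms n" using finite_perms by simp
    fix k assume k: "k \<in> kseqs n 4"
    have "size (filter_mset (\<lambda>\<pi>. subseq k \<pi>) (mset_set (perms n))) = card {p\<in>perms n. subseq k p}"
      using finite_perms by simp
    also have "\<dots> = lam" unfolding lam_def using count_le[OF k k0] count_le[OF k0 k] by simp
    finally show "size (filter_mset (\<lambda>\<pi>. subseq k \<pi>) (mset_set (perms n))) = lam" .
  qed
  then show ?thesis using pos by blast
qed

lemma PSCA_bound:
  assumes n4: "4 \<le> n" and lpos: "0 < lam" and X: "is_PSCA n 4 lam X"
  shows "(real n - 1) * (real n - 2) \<le> 48 * real lam"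
proof -
  obtain xs where xs: "mset xs = X" using ex_mset by blast
  interpret psca n lam "length xs" "\<lambda>i. xs ! i"
  proof
    show "4 \<le> n" by (rule n4)
    fix i assume "i < length xs"
    then have "xs ! i \<in> set_mset X" using xs by (metis nth_mem set_mset_mset)
    then show "xs ! i \<in> perms n" using X by (auto simp: is_PSCA_def)
  next
    fix k assume k: "k \<in> kseqs n 4"
    have "card {i. i < length xs \<and> subseq k (xs ! i)} = length (filter (\<lambda>\<pi>. subseq k \<pi>) xs)"
      by (simp add: length_filter_conv_card)
    also have "\<dots> = size (filter_mset (\<lambda>\<pi>. subseq k \<pi>) X)"
      by (metis mset_filter size_mset xs)
    also have "\<dots> = lam" using X k by (simp add: is_PSCA_def)
    finally show "card {i. i < length xs \<and> subseq k (xs ! i)} = lam" .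
  qed
  show ?thesis by (rule key[OF lpos])
qed

theorem mainTheorem10:
  fixes n :: nat
  assumes "4 \<le> n"
  shows "real (g n 4) \<ge> real n * (real n - 3) / 48"
proof -
  let ?P = "\<lambda>lam. 0 < lam \<and> (\<exists>X. is_PSCA n 4 lam X)"
  have "?P (g n 4)" unfolding g_def by (rule LeastI_ex) (rule PSCA_exists[OF assms])
  then obtain X where "0 < g n 4" "is_PSCA n 4 (g n 4) X" by blast
  then have "(real n - 1) * (real n - 2) \<le> 48 * real (g n 4)" using PSCA_bound assms by blast
  moreover have "real n * (real n - 3) \<le> (real n - 1) * (real n - 2)" by (simp add: algebra_simps)
  ultimately show ?thesis by simp
qed

end
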